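(* Let $H$ be a complex Hilbert space and $d$ a positive integer. Suppose that $A=(A_1,\ldots,A_d)$ is a $d$-tuple of commuting contractions on $H$ and $T=(T_1,\ldots,T_d)$ is the commuting operator-valued multishift on $\ell^2_H(\mathbb N^d)$ with operator weights $A^{(j)}_\alpha=A_j$ for all $\alpha\in\mathbb N^d$ and $j=1,\ldots,d$. Then $T$ satisfies the von Neumann's inequality if and only if $A$ satisfies the von Neumann's inequality.
   Context: $\mathbb N$ denotes the nonnegative integers; $\varepsilon_j\in\mathbb N^d$ has $1$ in the $j$-th place and $0$ elsewhere; $\mathbb D^d$ is the open unit polydisc. $\ell^2_H(\mathbb N^d)=\bigoplus_{\alpha\in\mathbb N^d}H$. Given bounded operators $A^{(j)}_\alpha:H\to H$, the operator-valued multishift with these operator weights is the $d$-tuple defined by $T_j(\oplus_\alpha x_\alpha)=\oplus_\alpha A^{(j)}_{\alpha-\varepsilon_j}x_{\alpha-\varepsilon_j}$ (the term being $0$ when $\alpha_j=0$). A commuting $d$-tuple $S$ of contractions satisfies the von Neumann's inequality if $\|p(S)\|\le\sup_{z\in\mathbb D^d}|p(z)|$ for every $p\in\mathbb C[z_1,\ldots,z_d]$, where $p(S)=\sum a_\alpha S_1^{\alpha_1}\cdots S_d^{\alpha_d}$ for $p=\sum a_\alpha z^\alpha$. *)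

theory Defs
  imports "HOL-Analysis.Analysis" "HOL-Library.Function_Algebras"
begin

text \<open>A complex (pre-)Hilbert space is given explicitly by a carrier set V inside an
  abelian group type, a complex scalar multiplication smul and an inner product ip
  (linear in the first argument, conjugate-linear in the second).\<close>

definition hnorm :: "('h \<Rightarrow> 'h \<Rightarrow> complex) \<Rightarrow> 'h \<Rightarrow> real" where
  "hnorm ip x = sqrt (Re (ip x x))"

definition chilbert ::
  "'h::ab_group_add set \<Rightarrow> (complex \<Rightarrow> 'h \<Rightarrow> 'h) \<Rightarrow> ('h \<Rightarrow> 'h \<Rightarrow> complex) \<Rightarrow> bool" where
  "chilbert V smul ip \<longleftrightarrow>
     0 \<in> V \<and>
     (\<forall>x\<in>V. \<forall>y\<in>V. x + y \<in> V) \<and>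
     (\<forall>a. \<forall>x\<in>V. smul a x \<in> V) \<and>
     (\<forall>x\<in>V. - x = smul (-1) x) \<and>
     (\<forall>a. \<forall>x\<in>V. \<forall>y\<in>V. smul a (x + y) = smul a x + smul a y) \<and>
     (\<forall>a b. \<forall>x\<in>V. smul (a + b) x = smul a x + smul b x) \<and>
     (\<forall>a b. \<forall>x\<in>V. smul a (smul b x) = smul (a * b) x) \<and>
     (\<forall>x\<in>V. smul 1 x = x) \<and>
     (\<forall>x\<in>V. \<forall>y\<in>V. \<forall>z\<in>V. ip (x + y) z = ip x z + ip y z) \<and>
     (\<forall>a. \<forall>x\<in>V. \<forall>y\<in>V. ip (smul a x) y = a * ip x y) \<and>
     (\<forall>x\<in>V. \<forall>y\<in>V. ip y x = cnj (ip x y)) \<and>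
     (\<forall>x\<in>V. Im (ip x x) = 0 \<and> Re (ip x x) \<ge> 0) \<and>
     (\<forall>x\<in>V. ip x x = 0 \<longrightarrow> x = 0) \<and>
     (\<forall>X::nat \<Rightarrow> 'h. (\<forall>n. X n \<in> V) \<longrightarrow>
        (\<forall>e>0. \<exists>N. \<forall>m\<ge>N. \<forall>n\<ge>N. hnorm ip (X m - X n) < e) \<longrightarrow>
        (\<exists>L\<in>V. (\<lambda>n. hnorm ip (X n - L)) \<longlonglongrightarrow> 0))"

definition bounded_op ::
  "'h::ab_group_add set \<Rightarrow> (complex \<Rightarrow> 'h \<Rightarrow> 'h) \<Rightarrow> ('h \<Rightarrow> 'h \<Rightarrow> complex) \<Rightarrow> ('h \<Rightarrow> 'h) \<Rightarrow> bool" where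
  "bounded_op V smul ip A \<longleftrightarrow>
     (\<forall>x\<in>V. A x \<in> V) \<and>
     (\<forall>x\<in>V. \<forall>y\<in>V. A (x + y) = A x + A y) \<and>
     (\<forall>a. \<forall>x\<in>V. A (smul a x) = smul a (A x)) \<and>
     (\<exists>K. \<forall>x\<in>V. hnorm ip (A x) \<le> K * hnorm ip x)"

definition opnorm :: "'h set \<Rightarrow> ('h \<Rightarrow> 'h \<Rightarrow> complex) \<Rightarrow> ('h \<Rightarrow> 'h) \<Rightarrow> real" where
  "opnorm V ip A = Sup ((\<lambda>x. hnorm ip (A x)) ` {x \<in> V. hnorm ip x \<le> 1})"

text \<open>d-tuples of operators are indexed by j < d (0-based).  Multi-indices in
  \<open>\<nat>^d\<close> are functions nat \<Rightarrow> nat vanishing at all j \<ge> d.\<close>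

definition multi_idx :: "nat \<Rightarrow> (nat \<Rightarrow> nat) set" where
  "multi_idx d = {\<alpha>. \<forall>j\<ge>d. \<alpha> j = 0}"

definition polydisc :: "nat \<Rightarrow> (nat \<Rightarrow> complex) set" where
  "polydisc d = {z. \<forall>j<d. cmod (z j) < 1}"

text \<open>A polynomial p = \<Sum>\<alpha>\<in>F. a \<alpha> z^\<alpha> in d variables is given by a finite set F of
  multi-indices and coefficients a.\<close>

definition poly_eval :: "nat \<Rightarrow> (nat \<Rightarrow> nat) set \<Rightarrow> ((nat \<Rightarrow> nat) \<Rightarrow> complex) \<Rightarrow> (nat \<Rightarrow> complex) \<Rightarrow> complex" where
  "poly_eval d F a z = (\<Sum>\<alpha>\<in>F. a \<alpha> * (\<Prod>j<d. z j ^ \<alpha> j))"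

definition mono_op :: "(nat \<Rightarrow> 'h \<Rightarrow> 'h) \<Rightarrow> nat \<Rightarrow> (nat \<Rightarrow> nat) \<Rightarrow> 'h \<Rightarrow> 'h" where
  "mono_op S d \<alpha> = foldr (\<lambda>j f. (S j ^^ \<alpha> j) \<circ> f) [0..<d] id"

definition poly_op ::
  "(complex \<Rightarrow> 'h \<Rightarrow> 'h) \<Rightarrow> nat \<Rightarrow> (nat \<Rightarrow> 'h \<Rightarrow> 'h) \<Rightarrow> (nat \<Rightarrow> nat) set \<Rightarrow> ((nat \<Rightarrow> nat) \<Rightarrow> complex) \<Rightarrow> 'h \<Rightarrow> 'h::comm_monoid_add" where
  "poly_op smul d S F a x = (\<Sum>\<alpha>\<in>F. smul (a \<alpha>) (mono_op S d \<alpha> x))"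

definition commuting_contractions ::
  "'h::ab_group_add set \<Rightarrow> (complex \<Rightarrow> 'h \<Rightarrow> 'h) \<Rightarrow> ('h \<Rightarrow> 'h \<Rightarrow> complex) \<Rightarrow> nat \<Rightarrow> (nat \<Rightarrow> 'h \<Rightarrow> 'h) \<Rightarrow> bool" where
  "commuting_contractions V smul ip d S \<longleftrightarrow>
     (\<forall>j<d. bounded_op V smul ip (S j) \<and> opnorm V ip (S j) \<le> 1) \<and>
     (\<forall>i<d. \<forall>j<d. \<forall>x\<in>V. S i (S j x) = S j (S i x))"

definition von_neumann_ineq ::
  "'h::ab_group_add set \<Rightarrow> (complex \<Rightarrow> 'h \<Rightarrow> 'h) \<Rightarrow> ('h \<Rightarrow> 'h \<Rightarrow> complex) \<Rightarrow> nat \<Rightarrow> (nat \<Rightarrow> 'h \<Rightarrow> 'h) \<Rightarrow> bool" where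
  "von_neumann_ineq V smul ip d S \<longleftrightarrow>
     (\<forall>F a. finite F \<longrightarrow> F \<subseteq> multi_idx d \<longrightarrow>
        opnorm V ip (poly_op smul d S F a) \<le> (SUP z\<in>polydisc d. cmod (poly_eval d F a z)))"

definition l2_space :: "('h::zero \<Rightarrow> 'h \<Rightarrow> complex) \<Rightarrow> nat \<Rightarrow> ((nat \<Rightarrow> nat) \<Rightarrow> 'h) set" where
  "l2_space ip d = {x. (\<forall>\<alpha>. \<alpha> \<notin> multi_idx d \<longrightarrow> x \<alpha> = 0) \<and>
                       (\<lambda>\<alpha>. (hnorm ip (x \<alpha>))\<^sup>2) summable_on multi_idx d}"

definition l2_smul :: "(complex \<Rightarrow> 'h \<Rightarrow> 'h) \<Rightarrow> complex \<Rightarrow> ((nat \<Rightarrow> nat) \<Rightarrow> 'h) \<Rightarrow> ((nat \<Rightarrow> nat) \<Rightarrow> 'h)" where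
  "l2_smul smul c x = (\<lambda>\<alpha>. smul c (x \<alpha>))"

definition l2_ip :: "('h \<Rightarrow> 'h \<Rightarrow> complex) \<Rightarrow> nat \<Rightarrow> ((nat \<Rightarrow> nat) \<Rightarrow> 'h) \<Rightarrow> ((nat \<Rightarrow> nat) \<Rightarrow> 'h) \<Rightarrow> complex" where
  "l2_ip ip d x y = infsum (\<lambda>\<alpha>. ip (x \<alpha>) (y \<alpha>)) (multi_idx d)"

definition multishift ::
  "nat \<Rightarrow> (nat \<Rightarrow> (nat \<Rightarrow> nat) \<Rightarrow> 'h \<Rightarrow> 'h) \<Rightarrow> nat \<Rightarrow> ((nat \<Rightarrow> nat) \<Rightarrow> 'h) \<Rightarrow> ((nat \<Rightarrow> nat) \<Rightarrow> 'h::zero)" where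
  "multishift d W j x = (\<lambda>\<alpha>. if \<alpha> \<in> multi_idx d \<and> 0 < \<alpha> j
                               then W j (\<alpha>(j := \<alpha> j - 1)) (x (\<alpha>(j := \<alpha> j - 1))) else 0)"

end

theory Submission
  imports Defs
begin

lemma sum_fun_apply': "(sum f A) x = sum (\<lambda>a. f a x) A"
  by (induction A rule: infinite_finite_induct) auto

lemma infsum_of_real_gen:
  "infsum (\<lambda>x. complex_of_real (f x)) A = complex_of_real (infsum f A)"
proof (cases "f summable_on A")
  case True
  then show ?thesis using has_sum_of_real[OF has_sum_infsum[OF True]]
    by (metis has_sum_infsum infsumI)
next
  case False
  have "\<not> (\<lambda>x. complex_of_real (f x)) summable_on A"
  proof
    assume "(\<lambda>x. complex_of_real (f x)) summable_on A"
    from summable_on_bounded_linear[OF bounded_linear_Re this] show False using False by simp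
  qed
  then show ?thesis using False by (simp add: infsum_not_exists)
qed

locale hs =
  fixes smul :: "complex \<Rightarrow> 'h::ab_group_add \<Rightarrow> 'h" and ip :: "'h \<Rightarrow> 'h \<Rightarrow> complex"
  assumes H: "chilbert UNIV smul ip"
begin

abbreviation "N \<equiv> hnorm ip"

lemmas H2 = H[unfolded chilbert_def ball_UNIV]


lemma smul_add: "smul a (x + y) = smul a x + smul a y" using H2[THEN conjunct2, THEN conjunct2, THEN conjunct2, THEN conjunct2, THEN conjunct1] by blast
lemma add_smul: "smul (a + b) x = smul a x + smul b x" using H2[THEN conjunct2, THEN conjunct2, THEN conjunct2, THEN conjunct2, THEN conjunct2, THEN conjunct1] by blast
lemma smul_smul: "smul a (smul b x) = smul (a * b) x" using H2[THEN conjunct2, THEN conjunct2, THEN conjunct2, THEN conjunct2, THEN conjunct2, THEN conjunct2, THEN conjunct1] by blast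
lemma smul_one[simp]: "smul 1 x = x" using H2[THEN conjunct2, THEN conjunct2, THEN conjunct2, THEN conjunct2, THEN conjunct2, THEN conjunct2, THEN conjunct2, THEN conjunct1] by blast
lemma neg_smul: "- x = smul (-1) x" using H2[THEN conjunct2, THEN conjunct2, THEN conjunct2, THEN conjunct1] by blast
lemma ip_add: "ip (x + y) z = ip x z + ip y z" using H2[THEN conjunct2, THEN conjunct2, THEN conjunct2, THEN conjunct2, THEN conjunct2, THEN conjunct2, THEN conjunct2, THEN conjunct2, THEN conjunct1] by blast
lemma ip_smul: "ip (smul a x) y = a * ip x y" using H2[THEN conjunct2, THEN conjunct2, THEN conjunct2, THEN conjunct2, THEN conjunct2, THEN conjunct2, THEN conjunct2, THEN conjunct2, THEN conjunct2, THEN conjunct1] by blast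
lemma ip_cnj: "ip y x = cnj (ip x y)" using H2[THEN conjunct2, THEN conjunct2, THEN conjunct2, THEN conjunct2, THEN conjunct2, THEN conjunct2, THEN conjunct2, THEN conjunct2, THEN conjunct2, THEN conjunct2, THEN conjunct1] by blast
lemma ip_self_Im: "Im (ip x x) = 0" using H2[THEN conjunct2, THEN conjunct2, THEN conjunct2, THEN conjunct2, THEN conjunct2, THEN conjunct2, THEN conjunct2, THEN conjunct2, THEN conjunct2, THEN conjunct2, THEN conjunct2, THEN conjunct1] by simp
lemma ip_self_Re: "Re (ip x x) \<ge> 0" using H2[THEN conjunct2, THEN conjunct2, THEN conjunct2, THEN conjunct2, THEN conjunct2, THEN conjunct2, THEN conjunct2, THEN conjunct2, THEN conjunct2, THEN conjunct2, THEN conjunct2, THEN conjunct1] by simp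
lemma ip_self_zero: "ip x x = 0 \<Longrightarrow> x = 0" using H2[THEN conjunct2, THEN conjunct2, THEN conjunct2, THEN conjunct2, THEN conjunct2, THEN conjunct2, THEN conjunct2, THEN conjunct2, THEN conjunct2, THEN conjunct2, THEN conjunct2, THEN conjunct2, THEN conjunct1] by blast

lemma smul_zero[simp]: "smul 0 x = 0"
  using add_smul[of 0 0 x] by simp
lemma smul_zero_right[simp]: "smul a 0 = 0"
  using smul_add[of a 0 0] by simp
lemma smul_sum: "smul a (sum f A) = sum (\<lambda>i. smul a (f i)) A"
  by (induction A rule: infinite_finite_induct) (auto simp: smul_add)
lemma smul_comm: "smul a (smul b x) = smul b (smul a x)"
  by (simp add: smul_smul mult.commute)
lemma smul_minus: "smul a (x - y) = smul a x - smul a y"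
proof -
  have "smul a (x - y) + smul a y = smul a x" using smul_add[of a "x - y" y] by simp
  thus ?thesis by (metis add_diff_cancel)
qed

lemma ip_zero[simp]: "ip 0 y = 0"
  using ip_add[of 0 0 y] by simp
lemma ip_zero_right[simp]: "ip y 0 = 0"
  using ip_cnj[of 0 y] by simp
lemma ip_add_right: "ip z (x + y) = ip z x + ip z y"
  by (metis ip_add ip_cnj complex_cnj_add)
lemma ip_smul_right: "ip y (smul a x) = cnj a * ip y x"
  by (metis ip_smul ip_cnj complex_cnj_mult)
lemma ip_sum: "ip (sum f A) y = sum (\<lambda>i. ip (f i) y) A"
  by (induction A rule: infinite_finite_induct) (auto simp: ip_add)
lemma ip_sum_right: "ip y (sum f A) = sum (\<lambda>i. ip y (f i)) A"
  by (induction A rule: infinite_finite_induct) (auto simp: ip_add_right)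
lemma ip_neg: "ip (- x) y = - ip x y"
  by (simp add: neg_smul ip_smul)
lemma ip_minus: "ip (x - y) z = ip x z - ip y z"
  by (metis diff_conv_add_uminus ip_add ip_neg)
lemma ip_minus_right: "ip z (x - y) = ip z x - ip z y"
  by (metis ip_minus ip_cnj complex_cnj_diff)

lemma N_nonneg: "N x \<ge> 0" by (simp add: hnorm_def ip_self_Re)
lemma N_sq: "(N x)\<^sup>2 = Re (ip x x)" using ip_self_Re[of x] by (simp add: hnorm_def)
lemma ip_self: "ip x x = complex_of_real ((N x)\<^sup>2)"
  using ip_self_Im N_sq by (simp add: complex_eq_iff)
lemma N_zero[simp]: "N 0 = 0" by (simp add: hnorm_def)
lemma N_eq_0: "N x = 0 \<longleftrightarrow> x = 0"
  using ip_self[of x] ip_self_zero by auto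
lemma N_smul: "N (smul a x) = cmod a * N x"
proof -
  have "ip (smul a x) (smul a x) = a * cnj a * ip x x" by (simp add: ip_smul ip_smul_right)
  also have "a * cnj a = complex_of_real ((cmod a)\<^sup>2)" using complex_norm_square by simp
  finally have "(N (smul a x))\<^sup>2 = ((cmod a)\<^sup>2) * (N x)\<^sup>2"
    by (simp add: N_sq)
  hence "(N (smul a x))\<^sup>2 = (cmod a * N x)\<^sup>2" by (simp add: power_mult_distrib)
  thus ?thesis using N_nonneg by (meson norm_ge_zero power2_eq_iff_nonneg zero_le_mult_iff)
qed

lemma cauchy_schwarz: "cmod (ip x y) \<le> N x * N y"
proof (cases "y = 0")
  case True then show ?thesis by simp
next
  case False
  define c where "c = ip y y"
  define t where "t = ip x y / c"
  have c: "c = complex_of_real ((N y)\<^sup>2)" "N y > 0"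
    using ip_self N_eq_0 N_nonneg False c_def by (auto simp: order_le_less)
  have "0 \<le> Re (ip (x - smul t y) (x - smul t y))" by (rule ip_self_Re)
  also have "ip (x - smul t y) (x - smul t y) = ip x x - cnj t * ip x y - t * ip y x + t * cnj t * c"
    by (simp add: ip_minus ip_minus_right ip_smul ip_smul_right c_def algebra_simps)
  also have "\<dots> = ip x x - ip x y * cnj (ip x y) / c"
    using c by (simp add: t_def ip_cnj[of x y] field_simps)
  also have "ip x y * cnj (ip x y) = complex_of_real ((cmod (ip x y))\<^sup>2)"
    by (rule complex_norm_square[symmetric])
  finally have "0 \<le> (N x)\<^sup>2 - (cmod (ip x y))\<^sup>2 / (N y)\<^sup>2"
    using c by (simp add: ip_self[of x])
  hence "(cmod (ip x y))\<^sup>2 \<le> (N x * N y)\<^sup>2"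
    using c by (simp add: field_simps power_mult_distrib)
  thus ?thesis using N_nonneg by (meson mult_nonneg_nonneg power2_le_imp_le)
qed

lemma N_add_sq: "(N (x + y))\<^sup>2 = (N x)\<^sup>2 + (N y)\<^sup>2 + 2 * Re (ip x y)"
proof -
  have "ip (x+y) (x+y) = ip x x + ip y y + (ip x y + cnj (ip x y))"
    by (simp add: ip_add ip_add_right ip_cnj[of x y])
  thus ?thesis by (simp add: N_sq)
qed

lemma N_triangle: "N (x + y) \<le> N x + N y"
proof -
  have "Re (ip x y) \<le> N x * N y" using cauchy_schwarz[of x y] complex_Re_le_cmod order_trans by blast
  hence "(N (x + y))\<^sup>2 \<le> (N x + N y)\<^sup>2" by (simp add: N_add_sq power2_sum)
  thus ?thesis using N_nonneg by (meson add_nonneg_nonneg power2_le_imp_le)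
qed

lemma N_sum: "N (sum f A) \<le> sum (\<lambda>i. N (f i)) A"
  by (induction A rule: infinite_finite_induct) (auto intro: order_trans[OF N_triangle])

end

context hs begin

definition lc :: "('h \<Rightarrow> 'h) \<Rightarrow> bool" where
  "lc B \<longleftrightarrow> (\<forall>x y. B (x + y) = B x + B y) \<and> (\<forall>a x. B (smul a x) = smul a (B x)) \<and> (\<forall>x. N (B x) \<le> N x)"

lemma lc_id: "lc id" by (simp add: lc_def)
lemma lc_comp: "lc B \<Longrightarrow> lc C \<Longrightarrow> lc (B \<circ> C)"
  unfolding lc_def by (auto intro: order_trans)
lemma lc_funpow: "lc B \<Longrightarrow> lc (B ^^ k)"
  by (induction k) (auto simp: lc_id intro: lc_comp)
lemma lc_foldr: "(\<And>j. j \<in> set js \<Longrightarrow> lc (S j)) \<Longrightarrow> lc (foldr (\<lambda>j f. (S j ^^ b j) \<circ> f) js id)"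
  by (induction js) (auto simp: lc_id intro!: lc_comp lc_funpow)
lemma lc_mono_op: "(\<And>j. j < d \<Longrightarrow> lc (S j)) \<Longrightarrow> lc (mono_op S d b)"
  unfolding mono_op_def by (rule lc_foldr) auto

lemma lc_add: "lc B \<Longrightarrow> B (x + y) = B x + B y" by (simp add: lc_def)
lemma lc_smul: "lc B \<Longrightarrow> B (smul a x) = smul a (B x)" by (simp add: lc_def)
lemma lc_N: "lc B \<Longrightarrow> N (B x) \<le> N x" by (simp add: lc_def)
lemma lc_zero: "lc B \<Longrightarrow> B 0 = 0" using lc_smul[of B 0 0] by simp
lemma lc_sum: "lc B \<Longrightarrow> B (sum f A) = sum (\<lambda>i. B (f i)) A"
  by (induction A rule: infinite_finite_induct) (auto simp: lc_add lc_zero)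

lemma opnorm_bound:
  assumes hom: "\<And>a x. B (smul a x) = smul a (B x)" and K: "\<And>x. N (B x) \<le> K * N x"
  shows "N (B x) \<le> opnorm UNIV ip B * N x"
proof -
  let ?S = "(\<lambda>x. N (B x)) ` {x \<in> UNIV. N x \<le> 1}"
  have bdd: "bdd_above ?S"
  proof (rule bdd_aboveI)
    fix y assume "y \<in> ?S"
    then obtain z where z: "N z \<le> 1" "y = N (B z)" by auto
    have "y \<le> K * N z" using K z by simp
    also have "\<dots> \<le> \<bar>K\<bar> * N z" by (simp add: N_nonneg mult_right_mono)
    also have "\<dots> \<le> \<bar>K\<bar>" using z(1) by (simp add: mult_left_le)
    finally show "y \<le> \<bar>K\<bar>" .
  qed
  have B0: "B 0 = 0" using hom[of 0 0] by simp
  show ?thesis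
  proof (cases "x = 0")
    case True then show ?thesis using B0 by simp
  next
    case False
    hence "N x \<noteq> 0" using N_eq_0 by simp
    hence nx: "N x > 0" using N_nonneg[of x] by linarith
    define y where "y = smul (complex_of_real (1 / N x)) x"
    have Ny: "N y = 1" using nx by (simp add: y_def N_smul norm_divide)
    have "N (B y) \<le> opnorm UNIV ip B"
      unfolding opnorm_def by (rule cSup_upper[OF _ bdd]) (use Ny in auto)
    moreover have "N (B y) = N (B x) / N x"
      using nx by (simp add: y_def hom N_smul norm_divide)
    ultimately show ?thesis using nx by (simp add: field_simps)
  qed
qed

lemma opnorm_le:
  assumes "\<And>x. N x \<le> 1 \<Longrightarrow> N (B x) \<le> K"
  shows "opnorm UNIV ip B \<le> K"
  unfolding opnorm_def
  by (rule cSup_least) (use assms in \<open>auto intro: exI[of _ 0]\<close>)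

lemma contraction_lc:
  assumes "bounded_op UNIV smul ip B" "opnorm UNIV ip B \<le> 1"
  shows "lc B"
proof -
  from assms(1) obtain K where K: "\<And>x. N (B x) \<le> K * N x" and
    add: "\<And>x y. B (x + y) = B x + B y" and hom: "\<And>a x. B (smul a x) = smul a (B x)"
    unfolding bounded_op_def by auto
  have "N (B x) \<le> N x" for x
  proof -
    have "N (B x) \<le> opnorm UNIV ip B * N x" by (rule opnorm_bound[OF hom K])
    also have "\<dots> \<le> 1 * N x" by (rule mult_right_mono[OF assms(2) N_nonneg])
    finally show ?thesis by simp
  qed
  thus ?thesis using add hom by (simp add: lc_def)
qed

lemma poly_op_hom:
  assumes "\<And>j. j < d \<Longrightarrow> lc (S j)"
  shows "poly_op smul d S F q (smul c v) = smul c (poly_op smul d S F q v)"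
  unfolding poly_op_def smul_sum
  by (rule sum.cong) (auto simp: lc_smul[OF lc_mono_op[OF assms]] smul_comm)

lemma poly_op_bound:
  assumes "\<And>j. j < d \<Longrightarrow> lc (S j)"
  shows "N (poly_op smul d S F q v) \<le> (\<Sum>b\<in>F. cmod (q b)) * N v"
proof -
  have "N (poly_op smul d S F q v) \<le> (\<Sum>b\<in>F. N (smul (q b) (mono_op S d b v)))"
    unfolding poly_op_def by (rule N_sum)
  also have "\<dots> \<le> (\<Sum>b\<in>F. cmod (q b) * N v)"
    by (rule sum_mono) (auto simp: N_smul intro!: mult_left_mono lc_N[OF lc_mono_op[OF assms]])
  finally show ?thesis by (simp add: sum_distrib_right)
qed

end

definition mbox :: "nat \<Rightarrow> nat \<Rightarrow> nat \<Rightarrow> (nat \<Rightarrow> nat) set" where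
  "mbox d lo hi = {\<alpha> \<in> multi_idx d. \<forall>j<d. lo \<le> \<alpha> j \<and> \<alpha> j < hi}"

lemma mbox_bij: "bij_betw (\<lambda>\<alpha>. restrict \<alpha> {..<d}) (mbox d lo hi) (PiE {..<d} (\<lambda>_. {lo..<hi}))"
proof (rule bij_betw_imageI)
  show "inj_on (\<lambda>\<alpha>. restrict \<alpha> {..<d}) (mbox d lo hi)"
  proof (rule inj_onI)
    fix x y assume xy: "x \<in> mbox d lo hi" "y \<in> mbox d lo hi" "restrict x {..<d} = restrict y {..<d}"
    show "x = y"
    proof
      fix j show "x j = y j"
      proof (cases "j < d")
        case True then show ?thesis using xy(3) by (metis lessThan_iff restrict_apply')
      next
        case False then show ?thesis using xy(1,2) by (auto simp: mbox_def multi_idx_def)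
      qed
    qed
  qed
  show "(\<lambda>\<alpha>. restrict \<alpha> {..<d}) ` mbox d lo hi = PiE {..<d} (\<lambda>_. {lo..<hi})"
  proof
    show "(\<lambda>\<alpha>. restrict \<alpha> {..<d}) ` mbox d lo hi \<subseteq> PiE {..<d} (\<lambda>_. {lo..<hi})"
    proof (rule image_subsetI)
      fix \<alpha> assume "\<alpha> \<in> mbox d lo hi"
      thus "restrict \<alpha> {..<d} \<in> PiE {..<d} (\<lambda>_. {lo..<hi})"
        by (subst restrict_PiE_iff) (auto simp: mbox_def)
    qed
    show "PiE {..<d} (\<lambda>_. {lo..<hi}) \<subseteq> (\<lambda>\<alpha>. restrict \<alpha> {..<d}) ` mbox d lo hi"
    proof
      fix f assume f: "f \<in> PiE {..<d} (\<lambda>_. {lo..<hi})"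
      define g where "g = (\<lambda>j. if j < d then f j else 0)"
      have "g \<in> mbox d lo hi" using f by (auto simp: g_def mbox_def multi_idx_def PiE_def)
      moreover have "f = restrict g {..<d}" using f by (auto simp: g_def PiE_def extensional_def)
      ultimately show "f \<in> (\<lambda>\<alpha>. restrict \<alpha> {..<d}) ` mbox d lo hi" by blast
    qed
  qed
qed

lemma finite_mbox: "finite (mbox d lo hi)"
  using bij_betw_finite[OF mbox_bij] by (simp add: finite_PiE)

lemma card_mbox: "card (mbox d lo hi) = (hi - lo) ^ d"
  using bij_betw_same_card[OF mbox_bij] by (simp add: card_PiE)

lemma mbox_sub: "mbox d lo hi \<subseteq> multi_idx d" by (auto simp: mbox_def)

lemma finite_sub_mbox:
  assumes "finite G" "G \<subseteq> multi_idx d"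
  shows "\<exists>n. G \<subseteq> mbox d 0 n"
proof -
  define n where "n = Suc (\<Sum>\<alpha>\<in>G. \<Sum>j<d. \<alpha> j)"
  have "\<alpha> j < n" if "\<alpha> \<in> G" "j < d" for \<alpha> j
  proof -
    have "\<alpha> j \<le> (\<Sum>j<d. \<alpha> j)" using that by (intro member_le_sum) auto
    also have "\<dots> \<le> (\<Sum>\<alpha>\<in>G. \<Sum>j<d. \<alpha> j)" using that assms(1)
      by (intro member_le_sum[where f="\<lambda>\<alpha>. \<Sum>j<d. \<alpha> j"]) auto
    finally show ?thesis by (simp add: n_def)
  qed
  thus ?thesis using assms(2) by (auto simp: mbox_def)
qed

definition kr :: "nat \<Rightarrow> nat \<Rightarrow> (nat \<Rightarrow> nat) \<Rightarrow> nat" where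
  "kr d m \<alpha> = (\<Sum>j<d. \<alpha> j * m ^ j)"

lemma kr_lt: "(\<And>j. j < d \<Longrightarrow> \<alpha> j < m) \<Longrightarrow> kr d m \<alpha> < m ^ d"
proof (induction d)
  case 0 then show ?case by (simp add: kr_def)
next
  case (Suc d)
  have "kr (Suc d) m \<alpha> = kr d m \<alpha> + \<alpha> d * m ^ d" by (simp add: kr_def)
  also have "\<dots> < m ^ d + \<alpha> d * m ^ d" using Suc by simp
  also have "\<dots> = (Suc (\<alpha> d)) * m ^ d" by simp
  also have "\<dots> \<le> m * m ^ d" using Suc.prems[of d] by (intro mult_right_mono) auto
  finally show ?case by simp
qed

lemma kr_inj:
  "(\<And>j. j < d \<Longrightarrow> \<alpha> j < m) \<Longrightarrow> (\<And>j. j < d \<Longrightarrow> \<beta> j < m) \<Longrightarrow> kr d m \<alpha> = kr d m \<beta>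
   \<Longrightarrow> j < d \<Longrightarrow> \<alpha> j = \<beta> j"
proof (induction d arbitrary: j)
  case 0 then show ?case by simp
next
  case (Suc d)
  have a: "kr d m \<alpha> < m ^ d" "kr d m \<beta> < m ^ d" using Suc.prems by (auto intro!: kr_lt)
  have eq: "kr d m \<alpha> + \<alpha> d * m ^ d = kr d m \<beta> + \<beta> d * m ^ d"
    using Suc.prems(3) by (simp add: kr_def)
  have M: "m ^ d \<noteq> 0" using a(1) by (intro notI) simp
  have "(kr d m \<alpha> + \<alpha> d * m ^ d) div m ^ d = \<alpha> d + kr d m \<alpha> div m ^ d" by (rule div_mult_self1[OF M])
  also have "\<dots> = \<alpha> d" using a by simp
  finally have e1: "(kr d m \<alpha> + \<alpha> d * m ^ d) div m ^ d = \<alpha> d" .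
  have "(kr d m \<beta> + \<beta> d * m ^ d) div m ^ d = \<beta> d + kr d m \<beta> div m ^ d" by (rule div_mult_self1[OF M])
  also have "\<dots> = \<beta> d" using a by simp
  finally have e2: "(kr d m \<beta> + \<beta> d * m ^ d) div m ^ d = \<beta> d" .
  note e1 e2
  hence d: "\<alpha> d = \<beta> d" using eq by metis
  hence "kr d m \<alpha> = kr d m \<beta>" using eq by simp
  then show ?case using Suc d by (cases "j = d") auto
qed

lemma kr_add: "kr d m (\<alpha> + \<beta>) = kr d m \<alpha> + kr d m \<beta>"
  by (simp add: kr_def sum.distrib algebra_simps)

definition ch :: "nat \<Rightarrow> nat \<Rightarrow> nat \<Rightarrow> complex" where
  "ch n k a = cis (2 * pi * real k * real a / real n)"

lemma cis_eq_1_int: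
  assumes "cis t = 1" shows "\<exists>z::int. t = of_int z * 2 * pi"
proof -
  have "cos t = 1" using assms by (metis cis.sel(1) one_complex.sel(1))
  thus ?thesis using cos_one_2pi_int by blast
qed

lemma ch_orth:
  assumes "a < n" "b < n"
  shows "(\<Sum>k<n. ch n k a * cnj (ch n k b)) = (if a = b then of_nat n else 0)"
proof -
  define w where "w = cis (2 * pi * (real a - real b) / real n)"
  have n: "n > 0" using assms by auto
  have "ch n k a * cnj (ch n k b) = w ^ k" for k
    unfolding ch_def w_def cis_cnj Complex.DeMoivre cis_mult
    by (rule arg_cong[where f=cis]) (simp add: field_simps diff_divide_distrib)
  hence "(\<Sum>k<n. ch n k a * cnj (ch n k b)) = (\<Sum>k<n. w ^ k)" by simp
  also have "\<dots> = (if a = b then of_nat n else 0)"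
  proof (cases "a = b")
    case True then show ?thesis by (simp add: w_def)
  next
    case False
    have wn: "w ^ n = 1"
    proof -
      have "w ^ n = cis (2 * pi * (real_of_int (int a - int b)))"
        unfolding w_def Complex.DeMoivre using n by (intro arg_cong[where f=cis]) (simp add: field_simps)
      also have "\<dots> = 1" by (rule cis_multiple_2pi) simp
      finally show ?thesis .
    qed
    have w1: "w \<noteq> 1"
    proof
      assume "w = 1"
      then obtain z :: int where z: "2 * pi * (real a - real b) / real n = of_int z * 2 * pi"
        using cis_eq_1_int unfolding w_def by blast
      hence "(2 * pi) * (real a - real b) = (2 * pi) * (of_int z * real n)" using n by (simp add: field_simps)
      hence "real a - real b = of_int z * real n" using pi_gt_zero by (simp only: mult_cancel_left) simp
      hence "real_of_int (int a - int b) = real_of_int (z * int n)" by simp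
      hence eq: "int a - int b = z * int n" by (simp only: of_int_eq_iff)
      have lt: "\<bar>int a - int b\<bar> < int n" using assms by auto
      have "z = 0"
      proof (rule ccontr)
        assume z0: "z \<noteq> 0"
        have "\<bar>z\<bar> * int n \<ge> 1 * int n" using z0 by (intro mult_right_mono) auto
        moreover have "\<bar>z * int n\<bar> = \<bar>z\<bar> * int n" by (simp add: abs_mult)
        ultimately show False using eq lt by linarith
      qed
      thus False using \<open>int a - int b = z * int n\<close> False by simp
    qed
    show ?thesis using False w1 wn by (simp add: sum_gp_strict)
  qed
  finally show ?thesis .
qed

definition ech :: "nat \<Rightarrow> nat \<Rightarrow> nat \<Rightarrow> nat \<Rightarrow> (nat \<Rightarrow> nat) \<Rightarrow> complex" where
  "ech d m n k \<alpha> = ch n k (kr d m \<alpha>)"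

lemma ech_orth:
  assumes "\<alpha> \<in> mbox d 0 m" "\<beta> \<in> mbox d 0 m"
  shows "(\<Sum>k<m^d. ech d m (m^d) k \<alpha> * cnj (ech d m (m^d) k \<beta>)) = (if \<alpha> = \<beta> then of_nat (m^d) else 0)"
proof -
  have a: "\<And>j. j < d \<Longrightarrow> \<alpha> j < m" "\<And>j. j < d \<Longrightarrow> \<beta> j < m" using assms by (auto simp: mbox_def)
  have "kr d m \<alpha> = kr d m \<beta> \<longleftrightarrow> \<alpha> = \<beta>"
  proof
    assume eq: "kr d m \<alpha> = kr d m \<beta>"
    show "\<alpha> = \<beta>"
    proof
      fix j show "\<alpha> j = \<beta> j"
        using kr_inj[OF a eq, of j] assms by (cases "j < d") (auto simp: mbox_def multi_idx_def)
    qed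
  qed simp
  thus ?thesis unfolding ech_def using ch_orth[OF kr_lt[OF a(1)] kr_lt[OF a(2)]] by simp
qed

lemma ech_add: "ech d m n k (\<alpha> + \<beta>) = ech d m n k \<alpha> * ech d m n k \<beta>"
  unfolding ech_def ch_def kr_add cis_mult by (simp add: add_divide_distrib distrib_left)

lemma norm_ech: "cmod (ech d m n k \<alpha>) = 1" by (simp add: ech_def ch_def)

lemma ech_prod:
  "ech d m n k \<beta> = (\<Prod>j<d. (cis (2 * pi * real k * real (m ^ j) / real n)) ^ \<beta> j)"
proof (induction d)
  case 0 then show ?case by (simp add: ech_def ch_def kr_def)
next
  case (Suc d)
  have "ech (Suc d) m n k \<beta> = ech d m n k \<beta> * cis (2 * pi * real k * real (m ^ d) / real n) ^ \<beta> d"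
    unfolding ech_def ch_def Complex.DeMoivre cis_mult by (rule arg_cong[where f=cis]) (simp add: kr_def field_simps add_divide_distrib)
  then show ?case using Suc by simp
qed

context hs begin

lemma parseval:
  assumes fin: "finite B" and orth: "\<And>\<alpha> \<beta>. \<alpha> \<in> B \<Longrightarrow> \<beta> \<in> B \<Longrightarrow>
      (\<Sum>k<n. e k \<alpha> * cnj (e k \<beta>)) = (if \<alpha> = \<beta> then of_nat n else 0)"
  shows "(\<Sum>k<n. (N (\<Sum>\<alpha>\<in>B. smul (e k \<alpha>) (z \<alpha>)))\<^sup>2) = real n * (\<Sum>\<alpha>\<in>B. (N (z \<alpha>))\<^sup>2)"
proof -
  have ipk: "ip (\<Sum>\<alpha>\<in>B. smul (e k \<alpha>) (z \<alpha>)) (\<Sum>\<alpha>\<in>B. smul (e k \<alpha>) (z \<alpha>)) =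
      (\<Sum>\<alpha>\<in>B. \<Sum>\<beta>\<in>B. (e k \<alpha> * cnj (e k \<beta>)) * ip (z \<alpha>) (z \<beta>))" for k
    by (simp add: ip_sum ip_sum_right ip_smul ip_smul_right sum_distrib_left mult_ac) (rule sum.swap)
  have "complex_of_real (\<Sum>k<n. (N (\<Sum>\<alpha>\<in>B. smul (e k \<alpha>) (z \<alpha>)))\<^sup>2) =
      (\<Sum>k<n. ip (\<Sum>\<alpha>\<in>B. smul (e k \<alpha>) (z \<alpha>)) (\<Sum>\<alpha>\<in>B. smul (e k \<alpha>) (z \<alpha>)))"
    by (simp add: ip_self)
  also have "\<dots> = (\<Sum>k<n. \<Sum>\<alpha>\<in>B. \<Sum>\<beta>\<in>B. (e k \<alpha> * cnj (e k \<beta>)) * ip (z \<alpha>) (z \<beta>))"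
    by (simp add: ipk)
  also have "\<dots> = (\<Sum>\<alpha>\<in>B. \<Sum>\<beta>\<in>B. (\<Sum>k<n. e k \<alpha> * cnj (e k \<beta>)) * ip (z \<alpha>) (z \<beta>))"
    by (simp add: sum.swap[of _ "{..<n}"] sum_distrib_right)
  also have "\<dots> = (\<Sum>\<alpha>\<in>B. \<Sum>\<beta>\<in>B. (if \<alpha> = \<beta> then of_nat n * ip (z \<alpha>) (z \<beta>) else 0))"
    by (intro sum.cong refl) (simp add: orth)
  also have "\<dots> = (\<Sum>\<alpha>\<in>B. of_nat n * ip (z \<alpha>) (z \<alpha>))"
    using fin by (simp add: sum.delta)
  also have "\<dots> = complex_of_real (real n * (\<Sum>\<alpha>\<in>B. (N (z \<alpha>))\<^sup>2))"
    by (simp add: ip_self sum_distrib_left)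
  finally show ?thesis by (simp only: of_real_eq_iff)
qed

end

locale ms = hs smul ip for smul :: "complex \<Rightarrow> 'h::ab_group_add \<Rightarrow> 'h" and ip +
  fixes d :: nat and A :: "nat \<Rightarrow> 'h \<Rightarrow> 'h"
  assumes lcA: "\<And>j. j < d \<Longrightarrow> lc (A j)"
begin

lemma lc_Ap: "lc (mono_op A d \<beta>)" by (rule lc_mono_op[OF lcA])

definition pyf :: "(nat \<Rightarrow> nat) set \<Rightarrow> ((nat \<Rightarrow> nat) \<Rightarrow> complex) \<Rightarrow> ((nat \<Rightarrow> nat) \<Rightarrow> 'h) \<Rightarrow> (nat \<Rightarrow> nat) \<Rightarrow> 'h" where
  "pyf F a x \<alpha> = (\<Sum>\<beta>\<in>F. smul (a \<beta>) (if (\<forall>j<d. \<beta> j \<le> \<alpha> j) then mono_op A d \<beta> (x (\<lambda>j. \<alpha> j - \<beta> j)) else 0))"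

lemma shift_sum:
  assumes \<beta>: "\<beta> \<in> multi_idx d" "\<And>j. j < d \<Longrightarrow> \<beta> j < D"
    and x0: "\<And>\<gamma>. \<gamma> \<in> mbox d 0 (N0 + D) \<Longrightarrow> \<gamma> \<notin> mbox d 0 N0 \<Longrightarrow> x \<gamma> = 0"
    and g0: "\<And>\<gamma>. g \<gamma> 0 = 0"
  shows "(\<Sum>\<alpha>\<in>mbox d 0 (N0 + D). if (\<forall>j<d. \<beta> j \<le> \<alpha> j) then g \<alpha> (x (\<lambda>j. \<alpha> j - \<beta> j)) else 0)
       = (\<Sum>\<gamma>\<in>mbox d 0 N0. g (\<beta> + \<gamma>) (x \<gamma>))"
proof -
  let ?B = "mbox d 0 (N0 + D)"
  let ?G = "\<lambda>\<alpha>. if (\<forall>j<d. \<beta> j \<le> \<alpha> j) then g \<alpha> (x (\<lambda>j. \<alpha> j - \<beta> j)) else 0"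
  have img: "(\<lambda>\<gamma>. \<beta> + \<gamma>) ` mbox d 0 N0 \<subseteq> ?B"
    using \<beta> by (fastforce simp: mbox_def multi_idx_def)
  have "sum ?G ?B = sum ?G ((\<lambda>\<gamma>. \<beta> + \<gamma>) ` mbox d 0 N0)"
  proof (rule sum.mono_neutral_right[OF finite_mbox img])
    show "\<forall>\<alpha>\<in>?B - (\<lambda>\<gamma>. \<beta> + \<gamma>) ` mbox d 0 N0. ?G \<alpha> = 0"
    proof
      fix \<alpha> assume \<alpha>: "\<alpha> \<in> ?B - (\<lambda>\<gamma>. \<beta> + \<gamma>) ` mbox d 0 N0"
      show "?G \<alpha> = 0"
      proof (cases "\<forall>j<d. \<beta> j \<le> \<alpha> j")
        case True
        define \<gamma> where "\<gamma> = (\<lambda>j. \<alpha> j - \<beta> j)"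
        have eq: "\<alpha> = \<beta> + \<gamma>"
        proof
          fix j show "\<alpha> j = (\<beta> + \<gamma>) j"
            using True \<alpha> \<beta> by (cases "j < d") (auto simp: \<gamma>_def mbox_def multi_idx_def)
        qed
        have "\<gamma> \<notin> mbox d 0 N0" using \<alpha> eq by blast
        moreover have "\<gamma> \<in> ?B" using \<alpha> by (auto simp: \<gamma>_def mbox_def multi_idx_def)
        ultimately have "x \<gamma> = 0" using x0 by blast
        thus ?thesis using True g0 by (simp add: \<gamma>_def)
      qed auto
    qed
  qed
  also have "\<dots> = (\<Sum>\<gamma>\<in>mbox d 0 N0. ?G (\<beta> + \<gamma>))"
    by (subst sum.reindex) (auto simp: inj_on_def fun_eq_iff)
  also have "\<dots> = (\<Sum>\<gamma>\<in>mbox d 0 N0. g (\<beta> + \<gamma>) (x \<gamma>))"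
    by (intro sum.cong refl) (simp add: fun_eq_iff)
  finally show ?thesis .
qed


lemma dft:
  assumes F: "finite F" "F \<subseteq> multi_idx d" and D: "\<And>\<beta> j. \<beta> \<in> F \<Longrightarrow> j < d \<Longrightarrow> \<beta> j < D"
    and K: "\<And>\<omega> v. (\<And>j. cmod (\<omega> j) = 1) \<Longrightarrow>
       N (poly_op smul d A F (\<lambda>\<beta>. a \<beta> * (\<Prod>j<d. \<omega> j ^ \<beta> j)) v) \<le> K * N v"
    and x0: "\<And>\<gamma>. \<gamma> \<in> mbox d 0 (N0 + D) \<Longrightarrow> \<gamma> \<notin> mbox d 0 N0 \<Longrightarrow> x \<gamma> = 0"
  shows "(\<Sum>\<alpha>\<in>mbox d 0 (N0 + D). (N (pyf F a x \<alpha>))\<^sup>2) \<le> K\<^sup>2 * (\<Sum>\<alpha>\<in>mbox d 0 (N0 + D). (N (x \<alpha>))\<^sup>2)"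
proof -
  define m where "m = N0 + D"
  define n where "n = m ^ d"
  define B where "B = mbox d 0 m"
  define e where "e = ech d m n"
  define \<omega> where "\<omega> = (\<lambda>k j. cis (2 * pi * real k * real (m ^ j) / real n))"
  define X where "X = (\<lambda>k. \<Sum>\<gamma>\<in>B. smul (e k \<gamma>) (x \<gamma>))"
  define Y where "Y = (\<lambda>k. \<Sum>\<alpha>\<in>B. smul (e k \<alpha>) (pyf F a x \<alpha>))"
  define P where "P = (\<lambda>k. poly_op smul d A F (\<lambda>\<beta>. a \<beta> * (\<Prod>j<d. \<omega> k j ^ \<beta> j)))"
  have eprod: "(\<Prod>j<d. \<omega> k j ^ \<beta> j) = e k \<beta>" for k \<beta>
    unfolding \<omega>_def e_def by (rule ech_prod[symmetric])
  have x0': "\<And>\<gamma>. \<gamma> \<in> mbox d 0 (N0 + D) \<Longrightarrow> \<gamma> \<notin> mbox d 0 N0 \<Longrightarrow> smul c (mono_op A d \<beta> (x \<gamma>)) = 0" for c \<beta>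
    using x0 lc_zero[OF lc_Ap] by simp
  have YP: "Y k = P k (X k)" for k
  proof -
    have "P k (X k) = (\<Sum>\<beta>\<in>F. \<Sum>\<gamma>\<in>B. smul (a \<beta> * e k \<beta> * e k \<gamma>) (mono_op A d \<beta> (x \<gamma>)))"
      unfolding P_def poly_op_def X_def eprod
      by (simp add: lc_sum[OF lc_Ap] lc_smul[OF lc_Ap] smul_sum smul_smul mult_ac)
    also have "\<dots> = (\<Sum>\<beta>\<in>F. \<Sum>\<gamma>\<in>mbox d 0 N0. smul (a \<beta> * e k \<beta> * e k \<gamma>) (mono_op A d \<beta> (x \<gamma>)))"
    proof (rule sum.cong[OF refl])
      fix \<beta> show "(\<Sum>\<gamma>\<in>B. smul (a \<beta> * e k \<beta> * e k \<gamma>) (mono_op A d \<beta> (x \<gamma>))) =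
          (\<Sum>\<gamma>\<in>mbox d 0 N0. smul (a \<beta> * e k \<beta> * e k \<gamma>) (mono_op A d \<beta> (x \<gamma>)))"
        unfolding B_def m_def by (rule sum.mono_neutral_right[OF finite_mbox]) (auto simp: mbox_def x0')
    qed
    also have "\<dots> = (\<Sum>\<beta>\<in>F. \<Sum>\<alpha>\<in>B. if (\<forall>j<d. \<beta> j \<le> \<alpha> j) then
        smul (e k \<alpha> * a \<beta>) (mono_op A d \<beta> (x (\<lambda>j. \<alpha> j - \<beta> j))) else 0)"
    proof (rule sum.cong[OF refl])
      fix \<beta> assume "\<beta> \<in> F"
      hence "(\<Sum>\<alpha>\<in>B. if (\<forall>j<d. \<beta> j \<le> \<alpha> j) then
        (\<lambda>\<alpha> v. smul (e k \<alpha> * a \<beta>) (mono_op A d \<beta> v)) \<alpha> (x (\<lambda>j. \<alpha> j - \<beta> j)) else 0) =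
        (\<Sum>\<gamma>\<in>mbox d 0 N0. (\<lambda>\<alpha> v. smul (e k \<alpha> * a \<beta>) (mono_op A d \<beta> v)) (\<beta> + \<gamma>) (x \<gamma>))"
        unfolding B_def m_def
        by (intro shift_sum) (use F D x0 lc_zero[OF lc_Ap] in auto)
      thus "(\<Sum>\<gamma>\<in>mbox d 0 N0. smul (a \<beta> * e k \<beta> * e k \<gamma>) (mono_op A d \<beta> (x \<gamma>))) =
        (\<Sum>\<alpha>\<in>B. if (\<forall>j<d. \<beta> j \<le> \<alpha> j) then
        smul (e k \<alpha> * a \<beta>) (mono_op A d \<beta> (x (\<lambda>j. \<alpha> j - \<beta> j))) else 0)"
        by (simp add: e_def ech_add mult_ac)
    qed
    also have "\<dots> = Y k"
      unfolding Y_def pyf_def smul_sum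
      by (subst sum.swap) (auto intro!: sum.cong simp: smul_smul)
    finally show ?thesis by simp
  qed
  have ecmod: "cmod (\<omega> k j) = 1" for k j by (simp add: \<omega>_def)
  have NY: "(N (Y k))\<^sup>2 \<le> K\<^sup>2 * (N (X k))\<^sup>2" for k
  proof -
    have "N (Y k) \<le> K * N (X k)" unfolding YP P_def by (rule K[OF ecmod])
    hence "(N (Y k))\<^sup>2 \<le> (K * N (X k))\<^sup>2" using N_nonneg by (intro power_mono) auto
    thus ?thesis by (simp add: power_mult_distrib)
  qed
  have orth: "\<And>\<alpha> \<beta>. \<alpha> \<in> B \<Longrightarrow> \<beta> \<in> B \<Longrightarrow>
      (\<Sum>k<n. e k \<alpha> * cnj (e k \<beta>)) = (if \<alpha> = \<beta> then of_nat n else 0)"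
    unfolding e_def n_def B_def by (rule ech_orth)
  have "real n * (\<Sum>\<alpha>\<in>B. (N (pyf F a x \<alpha>))\<^sup>2) = (\<Sum>k<n. (N (Y k))\<^sup>2)"
    unfolding Y_def by (rule parseval[symmetric, OF _ orth]) (auto simp: B_def finite_mbox)
  also have "\<dots> \<le> (\<Sum>k<n. K\<^sup>2 * (N (X k))\<^sup>2)" by (rule sum_mono[OF NY])
  also have "\<dots> = K\<^sup>2 * (real n * (\<Sum>\<alpha>\<in>B. (N (x \<alpha>))\<^sup>2))"
    unfolding X_def sum_distrib_left[symmetric] by (subst parseval[OF _ orth]) (auto simp: B_def finite_mbox)
  finally have main: "real n * (\<Sum>\<alpha>\<in>B. (N (pyf F a x \<alpha>))\<^sup>2) \<le> real n * (K\<^sup>2 * (\<Sum>\<alpha>\<in>B. (N (x \<alpha>))\<^sup>2))"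
    by (simp add: mult_ac)
  show ?thesis
  proof (cases "n = 0")
    case True
    hence "m = 0" "d > 0" by (auto simp: n_def)
    hence "B = {}" by (auto simp: B_def mbox_def)
    thus ?thesis by (simp add: B_def m_def)
  next
    case False
    thus ?thesis using main by (simp add: B_def m_def)
  qed
qed

end

context ms begin

abbreviation T where "T \<equiv> multishift d (\<lambda>j \<alpha>. A j)"

lemma T_funpow:
  assumes j: "j < d" and z0: "\<And>\<alpha>. \<alpha> \<notin> multi_idx d \<Longrightarrow> z \<alpha> = 0"
  shows "(T j ^^ k) z \<alpha> = (if \<alpha> \<in> multi_idx d \<and> k \<le> \<alpha> j then (A j ^^ k) (z (\<alpha>(j := \<alpha> j - k))) else 0)"
proof (induction k arbitrary: \<alpha>)
  case 0 show ?case using z0 by auto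
next
  case (Suc k)
  have mi: "\<alpha>(j := \<alpha> j - 1) \<in> multi_idx d \<longleftrightarrow> \<alpha> \<in> multi_idx d" using j by (auto simp: multi_idx_def)
  have A0: "A j 0 = 0" by (rule lc_zero[OF lcA[OF j]])
  have "(T j ^^ Suc k) z \<alpha> = T j ((T j ^^ k) z) \<alpha>" by simp
  also have "\<dots> = (if \<alpha> \<in> multi_idx d \<and> 0 < \<alpha> j then A j ((T j ^^ k) z (\<alpha>(j := \<alpha> j - 1))) else 0)"
    by (simp add: multishift_def)
  also have "\<dots> = (if \<alpha> \<in> multi_idx d \<and> Suc k \<le> \<alpha> j then (A j ^^ Suc k) (z (\<alpha>(j := \<alpha> j - Suc k))) else 0)"
  proof (cases "\<alpha> \<in> multi_idx d \<and> 0 < \<alpha> j")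
    case True
    define \<alpha>' where "\<alpha>' = \<alpha>(j := \<alpha> j - 1)"
    have IH0: "(T j ^^ k) z \<alpha>' = (if \<alpha>' \<in> multi_idx d \<and> k \<le> \<alpha>' j then (A j ^^ k) (z (\<alpha>'(j := \<alpha>' j - k))) else 0)"
      by (rule Suc.IH)
    have "\<alpha>' \<in> multi_idx d" using mi True by (simp add: \<alpha>'_def)
    hence IH: "(T j ^^ k) z \<alpha>' = (if k \<le> \<alpha>' j then (A j ^^ k) (z (\<alpha>'(j := \<alpha>' j - k))) else 0)"
      using IH0 by simp
    have aj: "\<alpha>' j = \<alpha> j - 1" and upd: "\<alpha>'(j := \<alpha>' j - k) = \<alpha>(j := \<alpha> j - Suc k)"
      by (simp_all add: \<alpha>'_def)
    have "(if \<alpha> \<in> multi_idx d \<and> 0 < \<alpha> j then A j ((T j ^^ k) z \<alpha>') else 0) = A j ((T j ^^ k) z \<alpha>')"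
      using True by simp
    also have "\<dots> = (if \<alpha> \<in> multi_idx d \<and> Suc k \<le> \<alpha> j then (A j ^^ Suc k) (z (\<alpha>(j := \<alpha> j - Suc k))) else 0)"
    proof (cases "Suc k \<le> \<alpha> j")
      case True2: True
      hence "k \<le> \<alpha>' j" using aj by simp
      thus ?thesis using True True2 IH upd by simp
    next
      case False
      hence "\<not> k \<le> \<alpha>' j" using aj True by arith
      thus ?thesis using False IH A0 by simp
    qed
    finally show ?thesis unfolding \<alpha>'_def .
  next
    case False
    thus ?thesis by auto
  qed
  finally show ?case .
qed

lemma T_foldr:
  assumes "distinct js" "set js \<subseteq> {..<d}" and x0: "\<And>\<alpha>. \<alpha> \<notin> multi_idx d \<Longrightarrow> x \<alpha> = 0"
  shows "foldr (\<lambda>j f. (T j ^^ \<beta> j) \<circ> f) js id x \<alpha> =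
    (if \<alpha> \<in> multi_idx d \<and> (\<forall>j\<in>set js. \<beta> j \<le> \<alpha> j)
     then foldr (\<lambda>j f. (A j ^^ \<beta> j) \<circ> f) js id (x (\<lambda>i. if i \<in> set js then \<alpha> i - \<beta> i else \<alpha> i)) else 0)"
  using assms(1,2)
proof (induction js arbitrary: \<alpha>)
  case Nil then show ?case using x0 by auto
next
  case (Cons j js)
  define z where "z = foldr (\<lambda>j f. (T j ^^ \<beta> j) \<circ> f) js id x"
  have j: "j < d" "j \<notin> set js" using Cons.prems by auto
  have IH: "z \<gamma> = (if \<gamma> \<in> multi_idx d \<and> (\<forall>j\<in>set js. \<beta> j \<le> \<gamma> j)
     then foldr (\<lambda>j f. (A j ^^ \<beta> j) \<circ> f) js id (x (\<lambda>i. if i \<in> set js then \<gamma> i - \<beta> i else \<gamma> i)) else 0)" for \<gamma>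
    unfolding z_def by (rule Cons.IH) (use Cons.prems in auto)
  have z0: "\<And>\<gamma>. \<gamma> \<notin> multi_idx d \<Longrightarrow> z \<gamma> = 0" using IH by simp
  have A0: "(A j ^^ \<beta> j) 0 = 0" by (rule lc_zero[OF lc_funpow[OF lcA[OF j(1)]]])
  have mi: "\<alpha>(j := \<alpha> j - \<beta> j) \<in> multi_idx d \<longleftrightarrow> \<alpha> \<in> multi_idx d" using j by (auto simp: multi_idx_def)
  have fe: "(\<lambda>i. if i \<in> set js then (\<alpha>(j := \<alpha> j - \<beta> j)) i - \<beta> i else (\<alpha>(j := \<alpha> j - \<beta> j)) i)
      = (\<lambda>i. if i \<in> set (j # js) then \<alpha> i - \<beta> i else \<alpha> i)"
    using j by (auto simp: fun_eq_iff)
  have "foldr (\<lambda>j f. (T j ^^ \<beta> j) \<circ> f) (j # js) id x \<alpha> = (T j ^^ \<beta> j) z \<alpha>"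
    by (simp add: z_def)
  also have "\<dots> = (if \<alpha> \<in> multi_idx d \<and> \<beta> j \<le> \<alpha> j then (A j ^^ \<beta> j) (z (\<alpha>(j := \<alpha> j - \<beta> j))) else 0)"
    by (rule T_funpow[OF j(1) z0])
  also have "\<dots> = (if \<alpha> \<in> multi_idx d \<and> (\<forall>j\<in>set (j # js). \<beta> j \<le> \<alpha> j)
     then foldr (\<lambda>j f. (A j ^^ \<beta> j) \<circ> f) (j # js) id (x (\<lambda>i. if i \<in> set (j # js) then \<alpha> i - \<beta> i else \<alpha> i)) else 0)"
  proof (cases "\<alpha> \<in> multi_idx d \<and> \<beta> j \<le> \<alpha> j")
    case True
    have same: "\<forall>i\<in>set js. (\<alpha>(j := \<alpha> j - \<beta> j)) i = \<alpha> i" using j by auto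
    have "z (\<alpha>(j := \<alpha> j - \<beta> j)) = (if (\<forall>i\<in>set js. \<beta> i \<le> \<alpha> i)
     then foldr (\<lambda>j f. (A j ^^ \<beta> j) \<circ> f) js id (x (\<lambda>i. if i \<in> set (j # js) then \<alpha> i - \<beta> i else \<alpha> i)) else 0)"
      using IH[of "\<alpha>(j := \<alpha> j - \<beta> j)"] mi True same fe by simp
    thus ?thesis using True A0 by simp
  next
    case False
    thus ?thesis by auto
  qed
  finally show ?case .
qed

lemma T_mono:
  assumes x0: "\<And>\<alpha>. \<alpha> \<notin> multi_idx d \<Longrightarrow> x \<alpha> = 0"
  shows "mono_op T d \<beta> x \<alpha> = (if \<alpha> \<in> multi_idx d \<and> (\<forall>j<d. \<beta> j \<le> \<alpha> j) then mono_op A d \<beta> (x (\<lambda>i. \<alpha> i - \<beta> i)) else 0)"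
proof -
  have "mono_op T d \<beta> x \<alpha> = (if \<alpha> \<in> multi_idx d \<and> (\<forall>j\<in>set [0..<d]. \<beta> j \<le> \<alpha> j)
     then mono_op A d \<beta> (x (\<lambda>i. if i \<in> set [0..<d] then \<alpha> i - \<beta> i else \<alpha> i)) else 0)"
    unfolding mono_op_def by (rule T_foldr[OF _ _ x0]) auto
  moreover have "\<alpha> \<in> multi_idx d \<Longrightarrow> (\<lambda>i. if i \<in> set [0..<d] then \<alpha> i - \<beta> i else \<alpha> i) = (\<lambda>i. \<alpha> i - \<beta> i)"
    by (auto simp: fun_eq_iff multi_idx_def)
  ultimately show ?thesis by auto
qed

lemma pT:
  assumes x0: "\<And>\<alpha>. \<alpha> \<notin> multi_idx d \<Longrightarrow> x \<alpha> = 0"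
  shows "poly_op (l2_smul smul) d T F a x \<alpha> = (if \<alpha> \<in> multi_idx d then pyf F a x \<alpha> else 0)"
  unfolding poly_op_def sum_fun_apply' l2_smul_def pyf_def
  by (auto simp: T_mono[OF x0] intro!: sum.neutral sum.cong)

lemma l2_norm_eq: "hnorm (l2_ip ip d) y = sqrt (infsum (\<lambda>\<alpha>. (N (y \<alpha>))\<^sup>2) (multi_idx d))"
proof -
  have "l2_ip ip d y y = complex_of_real (infsum (\<lambda>\<alpha>. (N (y \<alpha>))\<^sup>2) (multi_idx d))"
    unfolding l2_ip_def ip_self by (rule infsum_of_real_gen)
  thus ?thesis by (simp only: hnorm_def Re_complex_of_real)
qed

lemma l2_core:
  assumes F: "finite F" "F \<subseteq> multi_idx d"
    and K: "\<And>\<omega> v. (\<And>j. cmod (\<omega> j) = 1) \<Longrightarrow>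
       N (poly_op smul d A F (\<lambda>\<beta>. a \<beta> * (\<Prod>j<d. \<omega> j ^ \<beta> j)) v) \<le> K * N v"
    and x: "x \<in> l2_space ip d"
  shows "(\<lambda>\<alpha>. (N (poly_op (l2_smul smul) d T F a x \<alpha>))\<^sup>2) summable_on multi_idx d \<and>
    infsum (\<lambda>\<alpha>. (N (poly_op (l2_smul smul) d T F a x \<alpha>))\<^sup>2) (multi_idx d)
      \<le> K\<^sup>2 * infsum (\<lambda>\<alpha>. (N (x \<alpha>))\<^sup>2) (multi_idx d)"
proof -
  have x0: "\<And>\<alpha>. \<alpha> \<notin> multi_idx d \<Longrightarrow> x \<alpha> = 0" and xs: "(\<lambda>\<alpha>. (N (x \<alpha>))\<^sup>2) summable_on multi_idx d"
    using x by (auto simp: l2_space_def)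
  define S where "S = infsum (\<lambda>\<alpha>. (N (x \<alpha>))\<^sup>2) (multi_idx d)"
  define D where "D = Suc (\<Sum>\<beta>\<in>F. \<Sum>j<d. \<beta> j)"
  have D: "\<beta> j < D" if "\<beta> \<in> F" "j < d" for \<beta> j
  proof -
    have "\<beta> j \<le> (\<Sum>j<d. \<beta> j)" using that by (intro member_le_sum) auto
    also have "\<dots> \<le> (\<Sum>\<beta>\<in>F. \<Sum>j<d. \<beta> j)" using that F
      by (intro member_le_sum[where f="\<lambda>\<beta>. \<Sum>j<d. \<beta> j"]) auto
    finally show ?thesis by (simp add: D_def)
  qed
  define y where "y = poly_op (l2_smul smul) d T F a x"
  have fin: "(\<Sum>\<alpha>\<in>G. (N (y \<alpha>))\<^sup>2) \<le> K\<^sup>2 * S" if G: "finite G" "G \<subseteq> multi_idx d" for G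
  proof -
    obtain N0 where N0: "G \<subseteq> mbox d 0 N0" using finite_sub_mbox[OF G] by blast
    define x' where "x' = (\<lambda>\<gamma>. if \<gamma> \<in> mbox d 0 N0 then x \<gamma> else 0)"
    have eq: "y \<alpha> = pyf F a x' \<alpha>" if \<alpha>: "\<alpha> \<in> mbox d 0 N0" for \<alpha>
    proof -
      have "y \<alpha> = pyf F a x \<alpha>" using \<alpha> by (simp add: y_def pT[OF x0] mbox_def)
      also have "\<dots> = pyf F a x' \<alpha>"
        unfolding pyf_def
      proof (rule sum.cong[OF refl])
        fix \<beta> assume "\<beta> \<in> F"
        have "(\<lambda>j. \<alpha> j - \<beta> j) \<in> mbox d 0 N0" if "\<forall>j<d. \<beta> j \<le> \<alpha> j"
          using \<alpha> by (auto simp: mbox_def multi_idx_def)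
        thus "smul (a \<beta>) (if \<forall>j<d. \<beta> j \<le> \<alpha> j then mono_op A d \<beta> (x (\<lambda>j. \<alpha> j - \<beta> j)) else 0) =
              smul (a \<beta>) (if \<forall>j<d. \<beta> j \<le> \<alpha> j then mono_op A d \<beta> (x' (\<lambda>j. \<alpha> j - \<beta> j)) else 0)"
          by (auto simp: x'_def)
      qed
      finally show ?thesis .
    qed
    have sub: "mbox d 0 N0 \<subseteq> mbox d 0 (N0 + D)" by (auto simp: mbox_def)
    have "(\<Sum>\<alpha>\<in>G. (N (y \<alpha>))\<^sup>2) \<le> (\<Sum>\<alpha>\<in>mbox d 0 N0. (N (y \<alpha>))\<^sup>2)"
      by (rule sum_mono2[OF finite_mbox N0]) auto
    also have "\<dots> = (\<Sum>\<alpha>\<in>mbox d 0 N0. (N (pyf F a x' \<alpha>))\<^sup>2)"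
      by (rule sum.cong[OF refl]) (simp add: eq)
    also have "\<dots> \<le> (\<Sum>\<alpha>\<in>mbox d 0 (N0 + D). (N (pyf F a x' \<alpha>))\<^sup>2)"
      by (rule sum_mono2[OF finite_mbox sub]) auto
    also have "\<dots> \<le> K\<^sup>2 * (\<Sum>\<alpha>\<in>mbox d 0 (N0 + D). (N (x' \<alpha>))\<^sup>2)"
      apply (rule dft[where a=a and K=K and D=D and F=F])
          apply (rule F(1))
         apply (rule F(2))
        apply (erule D, assumption)
       apply (rule K, assumption)
      apply (simp add: x'_def)
      done
    also have "\<dots> \<le> K\<^sup>2 * S"
    proof (rule mult_left_mono)
      have "(\<Sum>\<alpha>\<in>mbox d 0 (N0 + D). (N (x' \<alpha>))\<^sup>2) = (\<Sum>\<alpha>\<in>mbox d 0 N0. (N (x' \<alpha>))\<^sup>2)"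
        by (rule sum.mono_neutral_right[OF finite_mbox sub]) (auto simp: x'_def)
      also have "\<dots> = (\<Sum>\<alpha>\<in>mbox d 0 N0. (N (x \<alpha>))\<^sup>2)"
        by (rule sum.cong[OF refl]) (simp add: x'_def)
      also have "\<dots> \<le> S"
        unfolding S_def by (rule finite_sum_le_infsum[OF xs finite_mbox mbox_sub]) auto
      finally show "(\<Sum>\<alpha>\<in>mbox d 0 (N0 + D). (N (x' \<alpha>))\<^sup>2) \<le> S" .
    qed simp
    finally show ?thesis .
  qed
  have ys: "(\<lambda>\<alpha>. (N (y \<alpha>))\<^sup>2) summable_on multi_idx d"
    by (rule nonneg_bdd_above_summable_on) (auto intro!: bdd_aboveI[where M="K\<^sup>2 * S"] fin)
  have "infsum (\<lambda>\<alpha>. (N (y \<alpha>))\<^sup>2) (multi_idx d) \<le> K\<^sup>2 * S"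
    by (rule infsum_le_finite_sums[OF ys fin])
  thus ?thesis using ys unfolding y_def S_def by simp
qed

lemma l2_bound:
  assumes F: "finite F" "F \<subseteq> multi_idx d" and K0: "K \<ge> 0"
    and K: "\<And>\<omega> v. (\<And>j. cmod (\<omega> j) = 1) \<Longrightarrow>
       N (poly_op smul d A F (\<lambda>\<beta>. a \<beta> * (\<Prod>j<d. \<omega> j ^ \<beta> j)) v) \<le> K * N v"
    and x: "x \<in> l2_space ip d"
  shows "hnorm (l2_ip ip d) (poly_op (l2_smul smul) d T F a x) \<le> K * hnorm (l2_ip ip d) x"
proof -
  have "infsum (\<lambda>\<alpha>. (N (poly_op (l2_smul smul) d T F a x \<alpha>))\<^sup>2) (multi_idx d)
      \<le> K\<^sup>2 * infsum (\<lambda>\<alpha>. (N (x \<alpha>))\<^sup>2) (multi_idx d)"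
    using l2_core[OF F K x] by blast
  hence "sqrt (infsum (\<lambda>\<alpha>. (N (poly_op (l2_smul smul) d T F a x \<alpha>))\<^sup>2) (multi_idx d))
      \<le> sqrt (K\<^sup>2 * infsum (\<lambda>\<alpha>. (N (x \<alpha>))\<^sup>2) (multi_idx d))" by simp
  also have "\<dots> = K * sqrt (infsum (\<lambda>\<alpha>. (N (x \<alpha>))\<^sup>2) (multi_idx d))" using K0 by (simp add: real_sqrt_mult)
  finally show ?thesis unfolding l2_norm_eq .
qed

end

lemma fin_supp:
  assumes "finite B" "B \<subseteq> S" "\<And>\<alpha>. \<alpha> \<in> S \<Longrightarrow> \<alpha> \<notin> B \<Longrightarrow> f \<alpha> = 0"
  shows "f summable_on S" "infsum f S = sum f B"
proof -
  have "f summable_on B" using assms(1) by (rule summable_on_finite)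
  moreover have "(f summable_on B) = (f summable_on S)"
    by (rule summable_on_cong_neutral) (use assms in auto)
  ultimately show "f summable_on S" by simp
  have "infsum f S = infsum f B"
    by (rule infsum_cong_neutral) (use assms in auto)
  also have "\<dots> = sum f B" using assms(1) by (rule infsum_finite)
  finally show "infsum f S = sum f B" .
qed

lemma poly_eval_bound:
  assumes "z \<in> polydisc d"
  shows "cmod (poly_eval d F a z) \<le> (\<Sum>\<beta>\<in>F. cmod (a \<beta>))"
proof -
  have "cmod (poly_eval d F a z) \<le> (\<Sum>\<beta>\<in>F. cmod (a \<beta> * (\<Prod>j<d. z j ^ \<beta> j)))"
    unfolding poly_eval_def by (rule norm_sum)
  also have "\<dots> \<le> (\<Sum>\<beta>\<in>F. cmod (a \<beta>))"
  proof (rule sum_mono)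
    fix \<beta>
    have "cmod (\<Prod>j<d. z j ^ \<beta> j) = (\<Prod>j<d. cmod (z j) ^ \<beta> j)" by (simp add: prod_norm[symmetric] norm_power)
    also have "\<dots> \<le> 1"
    proof (rule prod_le_1)
      fix j assume "j \<in> {..<d}"
      hence "cmod (z j) \<le> 1" using assms by (auto simp: polydisc_def less_imp_le)
      thus "0 \<le> cmod (z j) ^ \<beta> j \<and> cmod (z j) ^ \<beta> j \<le> 1" by (simp add: power_le_one)
    qed
    finally show "cmod (a \<beta> * (\<Prod>j<d. z j ^ \<beta> j)) \<le> cmod (a \<beta>)"
      by (simp add: norm_mult mult_left_le)
  qed
  finally show ?thesis .
qed

lemma polydisc_0: "(\<lambda>_. 0) \<in> polydisc d" by (simp add: polydisc_def)

lemma sup_bdd: "bdd_above ((\<lambda>z. cmod (poly_eval d F a z)) ` polydisc d)"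
  by (rule bdd_aboveI[where M="\<Sum>\<beta>\<in>F. cmod (a \<beta>)"]) (auto intro: poly_eval_bound)

lemma sup_nonneg: "0 \<le> (SUP z\<in>polydisc d. cmod (poly_eval d F a z))"
  by (rule cSUP_upper2[OF sup_bdd polydisc_0]) simp

lemma twist_eval:
  "poly_eval d F (\<lambda>\<beta>. a \<beta> * (\<Prod>j<d. \<omega> j ^ \<beta> j)) z = poly_eval d F a (\<lambda>j. \<omega> j * z j)"
  unfolding poly_eval_def by (simp add: power_mult_distrib prod.distrib mult_ac)

lemma twist_sup:
  assumes "\<And>j. cmod (\<omega> j) = 1"
  shows "(SUP z\<in>polydisc d. cmod (poly_eval d F (\<lambda>\<beta>. a \<beta> * (\<Prod>j<d. \<omega> j ^ \<beta> j)) z))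
     \<le> (SUP z\<in>polydisc d. cmod (poly_eval d F a z))"
proof (rule cSUP_least)
  show "polydisc d \<noteq> {}" using polydisc_0 by blast
  fix z assume z: "z \<in> polydisc d"
  have "(\<lambda>j. \<omega> j * z j) \<in> polydisc d" using z assms by (simp add: polydisc_def norm_mult)
  thus "cmod (poly_eval d F (\<lambda>\<beta>. a \<beta> * (\<Prod>j<d. \<omega> j ^ \<beta> j)) z) \<le> (SUP z\<in>polydisc d. cmod (poly_eval d F a z))"
    unfolding twist_eval by (rule cSUP_upper[OF _ sup_bdd])
qed

context ms begin

lemma zero_l2: "(\<lambda>_. 0) \<in> l2_space ip d \<and> hnorm (l2_ip ip d) (\<lambda>_. 0) \<le> 1"
  by (simp add: l2_space_def l2_norm_eq)

lemma dir1:
  assumes vA: "von_neumann_ineq UNIV smul ip d A"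
  shows "von_neumann_ineq (l2_space ip d) (l2_smul smul) (l2_ip ip d) d T"
  unfolding von_neumann_ineq_def
proof (intro allI impI)
  fix F a assume F: "finite F" "F \<subseteq> multi_idx d"
  define M where "M = (SUP z\<in>polydisc d. cmod (poly_eval d F a z))"
  have M0: "M \<ge> 0" unfolding M_def by (rule sup_nonneg)
  have K: "N (poly_op smul d A F (\<lambda>\<beta>. a \<beta> * (\<Prod>j<d. \<omega> j ^ \<beta> j)) v) \<le> M * N v"
    if \<omega>: "\<And>j. cmod (\<omega> j) = 1" for \<omega> v
  proof -
    let ?q = "\<lambda>\<beta>. a \<beta> * (\<Prod>j<d. \<omega> j ^ \<beta> j)"
    have "N (poly_op smul d A F ?q v) \<le> opnorm UNIV ip (poly_op smul d A F ?q) * N v"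
      by (rule opnorm_bound[OF poly_op_hom[OF lcA] poly_op_bound[OF lcA]])
    also have "\<dots> \<le> M * N v"
    proof (rule mult_right_mono[OF _ N_nonneg])
      have "opnorm UNIV ip (poly_op smul d A F ?q) \<le> (SUP z\<in>polydisc d. cmod (poly_eval d F ?q z))"
        using vA F unfolding von_neumann_ineq_def by blast
      also have "\<dots> \<le> M" unfolding M_def by (rule twist_sup[OF \<omega>])
      finally show "opnorm UNIV ip (poly_op smul d A F ?q) \<le> M" .
    qed
    finally show ?thesis .
  qed
  show "opnorm (l2_space ip d) (l2_ip ip d) (poly_op (l2_smul smul) d T F a) \<le> M"
    unfolding opnorm_def
  proof (rule cSup_least)
    show "(\<lambda>x. hnorm (l2_ip ip d) (poly_op (l2_smul smul) d T F a x)) `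
        {x \<in> l2_space ip d. hnorm (l2_ip ip d) x \<le> 1} \<noteq> {}"
      using zero_l2 by blast
    fix r assume "r \<in> (\<lambda>x. hnorm (l2_ip ip d) (poly_op (l2_smul smul) d T F a x)) `
        {x \<in> l2_space ip d. hnorm (l2_ip ip d) x \<le> 1}"
    then obtain x where x: "x \<in> l2_space ip d" "hnorm (l2_ip ip d) x \<le> 1"
      and r: "r = hnorm (l2_ip ip d) (poly_op (l2_smul smul) d T F a x)" by blast
    have "r \<le> M * hnorm (l2_ip ip d) x" unfolding r by (rule l2_bound[OF F M0 K x(1)])
    also have "\<dots> \<le> M" using x(2) M0 by (simp add: mult_left_le)
    finally show "r \<le> M" .
  qed
qed


lemma dir2:
  assumes vT: "von_neumann_ineq (l2_space ip d) (l2_smul smul) (l2_ip ip d) d T"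
  shows "von_neumann_ineq UNIV smul ip d A"
  unfolding von_neumann_ineq_def
proof (intro allI impI)
  fix F a assume F: "finite F" "F \<subseteq> multi_idx d"
  define M where "M = (SUP z\<in>polydisc d. cmod (poly_eval d F a z))"
  have M0: "M \<ge> 0" unfolding M_def by (rule sup_nonneg)
  define PT where "PT = poly_op (l2_smul smul) d T F a"
  define PA where "PA = poly_op smul d A F a"
  have opT: "opnorm (l2_space ip d) (l2_ip ip d) PT \<le> M"
    using vT F unfolding von_neumann_ineq_def PT_def M_def by blast
  define K0 where "K0 = (\<Sum>\<beta>\<in>F. cmod (a \<beta>))"
  have K00: "K0 \<ge> 0" unfolding K0_def by (simp add: sum_nonneg)
  have K: "N (poly_op smul d A F (\<lambda>\<beta>. a \<beta> * (\<Prod>j<d. \<omega> j ^ \<beta> j)) v) \<le> K0 * N v"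
    if \<omega>: "\<And>j. cmod (\<omega> j) = 1" for \<omega> v
  proof -
    have "N (poly_op smul d A F (\<lambda>\<beta>. a \<beta> * (\<Prod>j<d. \<omega> j ^ \<beta> j)) v)
        \<le> (\<Sum>\<beta>\<in>F. cmod (a \<beta> * (\<Prod>j<d. \<omega> j ^ \<beta> j))) * N v"
      by (rule poly_op_bound[OF lcA])
    also have "(\<Sum>\<beta>\<in>F. cmod (a \<beta> * (\<Prod>j<d. \<omega> j ^ \<beta> j))) = K0"
      unfolding K0_def by (simp add: norm_mult prod_norm[symmetric] norm_power \<omega>)
    finally show ?thesis .
  qed
  let ?S = "(\<lambda>x. hnorm (l2_ip ip d) (PT x)) ` {x \<in> l2_space ip d. hnorm (l2_ip ip d) x \<le> 1}"
  have bdd: "bdd_above ?S"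
  proof (rule bdd_aboveI[where M=K0])
    fix r assume "r \<in> ?S"
    then obtain x where x: "x \<in> l2_space ip d" "hnorm (l2_ip ip d) x \<le> 1"
      and r: "r = hnorm (l2_ip ip d) (PT x)" by blast
    have "r \<le> K0 * hnorm (l2_ip ip d) x" unfolding r PT_def by (rule l2_bound[OF F K00 K x(1)])
    also have "\<dots> \<le> K0" using x(2) K00 by (simp add: mult_left_le)
    finally show "r \<le> K0" .
  qed
  have ball: "hnorm (l2_ip ip d) (PT x) \<le> M" if "x \<in> l2_space ip d" "hnorm (l2_ip ip d) x \<le> 1" for x
  proof -
    have "hnorm (l2_ip ip d) (PT x) \<le> opnorm (l2_space ip d) (l2_ip ip d) PT"
      unfolding opnorm_def by (rule cSup_upper[OF _ bdd]) (use that in auto)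
    thus ?thesis using opT by simp
  qed
  define D where "D = Suc (\<Sum>\<beta>\<in>F. \<Sum>j<d. \<beta> j)"
  have D: "\<beta> j < D" if "\<beta> \<in> F" "j < d" for \<beta> j
  proof -
    have "\<beta> j \<le> (\<Sum>j<d. \<beta> j)" using that by (intro member_le_sum) auto
    also have "\<dots> \<le> (\<Sum>\<beta>\<in>F. \<Sum>j<d. \<beta> j)" using that F
      by (intro member_le_sum[where f="\<lambda>\<beta>. \<Sum>j<d. \<beta> j"]) auto
    finally show ?thesis by (simp add: D_def)
  qed
  have D1: "D \<ge> 1" by (simp add: D_def)
  show "opnorm UNIV ip PA \<le> M"
  proof (rule opnorm_le)
    fix h assume h: "N h \<le> 1"
    have key: "(real n / real (Suc n)) ^ d * (N (PA h))\<^sup>2 \<le> M\<^sup>2" for n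
    proof -
      define L where "L = D * Suc n"
      define B where "B = mbox d 0 L"
      define I where "I = mbox d D L"
      have L1: "L \<ge> 1" using D1 by (simp add: L_def)
      have cB: "card B = L ^ d" by (simp add: B_def card_mbox)
      have cBpos: "real (card B) > 0" using cB L1 by simp
      define c where "c = complex_of_real (1 / sqrt (real (card B)))"
      have c2: "(cmod c)\<^sup>2 = 1 / real (card B)" using cBpos by (simp add: c_def norm_divide power_divide)
      define x where "x = (\<lambda>\<alpha>. if \<alpha> \<in> B then smul c h else 0)"
      have BMI: "B \<subseteq> multi_idx d" by (simp add: B_def mbox_sub)
      have x0: "\<And>\<alpha>. \<alpha> \<notin> multi_idx d \<Longrightarrow> x \<alpha> = 0" using BMI by (auto simp: x_def)
      have xfs: "(\<lambda>\<alpha>. (N (x \<alpha>))\<^sup>2) summable_on multi_idx d"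
          "infsum (\<lambda>\<alpha>. (N (x \<alpha>))\<^sup>2) (multi_idx d) = sum (\<lambda>\<alpha>. (N (x \<alpha>))\<^sup>2) B"
        by (rule fin_supp[OF _ BMI], simp add: B_def finite_mbox, simp add: x_def)+
      have "sum (\<lambda>\<alpha>. (N (x \<alpha>))\<^sup>2) B = real (card B) * ((cmod c)\<^sup>2 * (N h)\<^sup>2)"
        by (simp add: x_def N_smul power_mult_distrib)
      also have "\<dots> = (N h)\<^sup>2" using cBpos by (simp add: c2)
      finally have xn: "infsum (\<lambda>\<alpha>. (N (x \<alpha>))\<^sup>2) (multi_idx d) = (N h)\<^sup>2" using xfs(2) by simp
      have xl2: "x \<in> l2_space ip d" using x0 xfs(1) by (simp add: l2_space_def)
      have xle: "hnorm (l2_ip ip d) x \<le> 1" using h N_nonneg[of h] by (simp add: l2_norm_eq xn)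
      have PTle: "hnorm (l2_ip ip d) (PT x) \<le> M" by (rule ball[OF xl2 xle])
      have ys: "(\<lambda>\<alpha>. (N (PT x \<alpha>))\<^sup>2) summable_on multi_idx d"
        unfolding PT_def using l2_core[OF F K xl2] by blast
      have "infsum (\<lambda>\<alpha>. (N (PT x \<alpha>))\<^sup>2) (multi_idx d) \<le> M\<^sup>2"
      proof -
        have nn: "infsum (\<lambda>\<alpha>. (N (PT x \<alpha>))\<^sup>2) (multi_idx d) \<ge> 0" by (simp add: infsum_nonneg)
        have "sqrt (infsum (\<lambda>\<alpha>. (N (PT x \<alpha>))\<^sup>2) (multi_idx d)) \<le> M" using PTle by (simp add: l2_norm_eq)
        hence "(sqrt (infsum (\<lambda>\<alpha>. (N (PT x \<alpha>))\<^sup>2) (multi_idx d)))\<^sup>2 \<le> M\<^sup>2"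
          using nn by (intro power_mono) auto
        thus ?thesis using nn by simp
      qed
      have val: "PT x \<alpha> = smul c (PA h)" if \<alpha>: "\<alpha> \<in> I" for \<alpha>
      proof -
        have aMI: "\<alpha> \<in> multi_idx d" using \<alpha> by (auto simp: I_def mbox_def)
        have "PT x \<alpha> = pyf F a x \<alpha>" using aMI by (simp add: PT_def pT[OF x0])
        also have "\<dots> = (\<Sum>\<beta>\<in>F. smul (a \<beta>) (mono_op A d \<beta> (smul c h)))"
          unfolding pyf_def
        proof (rule sum.cong[OF refl])
          fix \<beta> assume \<beta>: "\<beta> \<in> F"
          have le: "\<forall>j<d. \<beta> j \<le> \<alpha> j"
          proof (intro allI impI)
            fix j assume j: "j < d"
            have "\<beta> j < D" using D[OF \<beta> j] .
            moreover have "D \<le> \<alpha> j" using \<alpha> j by (auto simp: I_def mbox_def)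
            ultimately show "\<beta> j \<le> \<alpha> j" by simp
          qed
          have "(\<lambda>j. \<alpha> j - \<beta> j) \<in> B" using \<alpha> by (auto simp: I_def B_def mbox_def multi_idx_def)
          thus "smul (a \<beta>) (if \<forall>j<d. \<beta> j \<le> \<alpha> j then mono_op A d \<beta> (x (\<lambda>j. \<alpha> j - \<beta> j)) else 0) =
                smul (a \<beta>) (mono_op A d \<beta> (smul c h))" using le by (simp add: x_def)
        qed
        also have "\<dots> = smul c (PA h)"
          unfolding PA_def poly_op_def smul_sum by (simp add: lc_smul[OF lc_Ap] smul_comm)
        finally show ?thesis .
      qed
      have "(\<Sum>\<alpha>\<in>I. (N (PT x \<alpha>))\<^sup>2) = real (card I) * ((cmod c)\<^sup>2 * (N (PA h))\<^sup>2)"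
        by (simp add: val N_smul power_mult_distrib)
      also have "\<dots> = (real n / real (Suc n)) ^ d * (N (PA h))\<^sup>2"
      proof -
        have "real (card I) * (cmod c)\<^sup>2 = real ((D * n) ^ d) / real ((D * Suc n) ^ d)"
          using c2 by (simp add: I_def card_mbox cB L_def diff_mult_distrib2)
        also have "\<dots> = ((real D * real n) / (real D * real (Suc n))) ^ d"
          by (simp only: of_nat_power of_nat_mult power_divide)
        also have "(real D * real n) / (real D * real (Suc n)) = real n / real (Suc n)"
          using D1 by (intro mult_divide_mult_cancel_left) simp
        finally have "real (card I) * (cmod c)\<^sup>2 = (real n / real (Suc n)) ^ d" .
        thus ?thesis by (simp add: mult.assoc[symmetric])
      qed
      finally have "(real n / real (Suc n)) ^ d * (N (PA h))\<^sup>2 = (\<Sum>\<alpha>\<in>I. (N (PT x \<alpha>))\<^sup>2)" by simp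
      also have "\<dots> \<le> infsum (\<lambda>\<alpha>. (N (PT x \<alpha>))\<^sup>2) (multi_idx d)"
        by (rule finite_sum_le_infsum[OF ys]) (auto simp: I_def finite_mbox mbox_sub)
      finally show ?thesis using \<open>infsum (\<lambda>\<alpha>. (N (PT x \<alpha>))\<^sup>2) (multi_idx d) \<le> M\<^sup>2\<close> by simp
    qed
    have lim: "(\<lambda>n. (real n / real (Suc n)) ^ d * (N (PA h))\<^sup>2) \<longlonglongrightarrow> 1 ^ d * (N (PA h))\<^sup>2"
      by (intro tendsto_mult_right tendsto_power LIMSEQ_n_over_Suc_n)
    have "1 ^ d * (N (PA h))\<^sup>2 \<le> M\<^sup>2"
      by (rule LIMSEQ_le_const2[OF lim]) (use key in auto)
    hence "(N (PA h))\<^sup>2 \<le> M\<^sup>2" by simp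
    thus "N (PA h) \<le> M" using M0 by (rule power2_le_imp_le)
  qed
qed

end

theorem proposition3p6:
  fixes smul :: "complex \<Rightarrow> 'h::ab_group_add \<Rightarrow> 'h"
    and ip :: "'h \<Rightarrow> 'h \<Rightarrow> complex"
    and d :: nat
    and A :: "nat \<Rightarrow> 'h \<Rightarrow> 'h"
  assumes H: "chilbert UNIV smul ip"
    and d: "d \<ge> 1"
    and A: "commuting_contractions UNIV smul ip d A"
  shows "von_neumann_ineq (l2_space ip d) (l2_smul smul) (l2_ip ip d) d
            (multishift d (\<lambda>j \<alpha>. A j))
         \<longleftrightarrow> von_neumann_ineq UNIV smul ip d A"
proof -
  interpret hs smul ip by unfold_locales (rule H)
  have lcA: "lc (A j)" if "j < d" for j
    using A that unfolding commuting_contractions_def by (auto intro: contraction_lc)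
  interpret ms smul ip d A by unfold_locales (rule lcA)
  show ?thesis using dir1 dir2 by blast
qed

end
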